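(* Let $H\in\mathbb{H}^{n\times n}$ be an invertible Hermitian quaternion matrix and let $X\in\mathbb{H}^{n\times n}$. Then $X$ admits an $H$-polar decomposition $X=UA$, with $U$ $H$-unitary and $A$ $H$-selfadjoint, if and only if there exists an $H$-selfadjoint matrix $A\in\mathbb{H}^{n\times n}$ with $A^2=X^{[*]}X$ and $\mathrm{Ker}\,X=\mathrm{Ker}\,A$.
   Context: $\mathbb{H}$ denotes the real quaternions, $\mathbb{H}^n$ is a right vector space, and $A^*$ is the conjugate transpose. The indefinite inner product is $[x,y]=y^*Hx$. The $H$-adjoint of $X$ is $X^{[*]}=H^{-1}X^*H$. A matrix $A$ is $H$-selfadjoint if $A^{[*]}=A$; a matrix $U$ is $H$-unitary if $U^*HU=H$. An $H$-polar decomposition of $X$ is a factorization $X=UA$ with $U$ $H$-unitary and $A$ $H$-selfadjoint. *)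

theory Defs
  imports "HOL-Analysis.Analysis"
begin

datatype quat = Quat (Re: real) (Im1: real) (Im2: real) (Im3: real)

lemma quat_eqI: "Re x = Re y \<Longrightarrow> Im1 x = Im1 y \<Longrightarrow> Im2 x = Im2 y \<Longrightarrow> Im3 x = Im3 y \<Longrightarrow> x = y"
  by (cases x; cases y) simp

instantiation quat :: ring_1
begin

definition "0 = Quat 0 0 0 0"
definition "1 = Quat 1 0 0 0"
definition "x + y = Quat (Re x + Re y) (Im1 x + Im1 y) (Im2 x + Im2 y) (Im3 x + Im3 y)"
definition "x - y = Quat (Re x - Re y) (Im1 x - Im1 y) (Im2 x - Im2 y) (Im3 x - Im3 y)"
definition "- x = Quat (- Re x) (- Im1 x) (- Im2 x) (- Im3 x)"
definition "x * y = Quat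
   (Re x * Re y - Im1 x * Im1 y - Im2 x * Im2 y - Im3 x * Im3 y)
   (Re x * Im1 y + Im1 x * Re y + Im2 x * Im3 y - Im3 x * Im2 y)
   (Re x * Im2 y - Im1 x * Im3 y + Im2 x * Re y + Im3 x * Im1 y)
   (Re x * Im3 y + Im1 x * Im2 y - Im2 x * Im1 y + Im3 x * Re y)"

instance
  by standard (auto intro!: quat_eqI simp: zero_quat_def one_quat_def plus_quat_def
      minus_quat_def uminus_quat_def times_quat_def algebra_simps)

end

definition qcnj :: "quat \<Rightarrow> quat" where
  "qcnj x = Quat (Re x) (- Im1 x) (- Im2 x) (- Im3 x)"

definition cstar :: "quat^'n^'m \<Rightarrow> quat^'m^'n" where
  "cstar A = (\<chi> i j. qcnj (A $ j $ i))"

definition hadj :: "quat^'n^'n \<Rightarrow> quat^'n^'n \<Rightarrow> quat^'n^'n" where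
  "hadj H X = matrix_inv H ** cstar X ** H"

definition H_selfadjoint :: "quat^'n^'n \<Rightarrow> quat^'n^'n \<Rightarrow> bool" where
  "H_selfadjoint H A \<longleftrightarrow> hadj H A = A"

definition H_unitary :: "quat^'n^'n \<Rightarrow> quat^'n^'n \<Rightarrow> bool" where
  "H_unitary H U \<longleftrightarrow> cstar U ** H ** U = H"

definition H_polar_decomposition :: "quat^'n^'n \<Rightarrow> quat^'n^'n \<Rightarrow> quat^'n^'n \<Rightarrow> quat^'n^'n \<Rightarrow> bool" where
  "H_polar_decomposition H X U A \<longleftrightarrow> H_unitary H U \<and> H_selfadjoint H A \<and> X = U ** A"

definition qker :: "quat^'n^'m \<Rightarrow> (quat^'n) set" where
  "qker A = {x. A *v x = 0}"

end

theory Submission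
  imports Defs
begin

section \<open>Quaternion algebra\<close>

lemma quat_eq_iff: "x = y \<longleftrightarrow> Re x = Re y \<and> Im1 x = Im1 y \<and> Im2 x = Im2 y \<and> Im3 x = Im3 y"
  by (auto intro: quat_eqI)

lemma quat_simps [simp]:
  "Re 0 = 0" "Im1 0 = 0" "Im2 0 = 0" "Im3 0 = 0"
  "Re 1 = 1" "Im1 1 = 0" "Im2 1 = 0" "Im3 1 = 0"
  "Re (x + y) = Re x + Re y" "Im1 (x + y) = Im1 x + Im1 y" "Im2 (x + y) = Im2 x + Im2 y" "Im3 (x + y) = Im3 x + Im3 y"
  "Re (x - y) = Re x - Re y" "Im1 (x - y) = Im1 x - Im1 y" "Im2 (x - y) = Im2 x - Im2 y" "Im3 (x - y) = Im3 x - Im3 y"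
  "Re (- x) = - Re x" "Im1 (- x) = - Im1 x" "Im2 (- x) = - Im2 x" "Im3 (- x) = - Im3 x"
  "Re (x * y) = Re x * Re y - Im1 x * Im1 y - Im2 x * Im2 y - Im3 x * Im3 y"
  "Im1 (x * y) = Re x * Im1 y + Im1 x * Re y + Im2 x * Im3 y - Im3 x * Im2 y"
  "Im2 (x * y) = Re x * Im2 y - Im1 x * Im3 y + Im2 x * Re y + Im3 x * Im1 y"
  "Im3 (x * y) = Re x * Im3 y + Im1 x * Im2 y - Im2 x * Im1 y + Im3 x * Re y"
  by (simp_all add: zero_quat_def one_quat_def plus_quat_def minus_quat_def uminus_quat_def times_quat_def)

lemma qcnj_simps [simp]:
  "Re (qcnj x) = Re x" "Im1 (qcnj x) = - Im1 x" "Im2 (qcnj x) = - Im2 x" "Im3 (qcnj x) = - Im3 x"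
  by (simp_all add: qcnj_def)

definition nsq :: "quat \<Rightarrow> real" where
  "nsq x = (Re x)^2 + (Im1 x)^2 + (Im2 x)^2 + (Im3 x)^2"

lemma nsq_ge0: "0 \<le> nsq x" by (simp add: nsq_def)

lemma nsq_eq0: "nsq x = 0 \<longleftrightarrow> x = 0"
  by (simp add: nsq_def quat_eq_iff add_nonneg_eq_0_iff)

instantiation quat :: real_vector
begin
definition "scaleR r x = Quat (r * Re x) (r * Im1 x) (r * Im2 x) (r * Im3 x)"

lemma scaleR_simps [simp]:
  "Re (r *\<^sub>R x) = r * Re x" "Im1 (r *\<^sub>R x) = r * Im1 x" "Im2 (r *\<^sub>R x) = r * Im2 x" "Im3 (r *\<^sub>R x) = r * Im3 x"
  by (simp_all add: scaleR_quat_def)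

instance
proof
  fix x y z :: quat and r s :: real
  show "r *\<^sub>R (x + y) = r *\<^sub>R x + r *\<^sub>R y" by (simp add: quat_eq_iff algebra_simps)
  show "(r + s) *\<^sub>R x = r *\<^sub>R x + s *\<^sub>R x" by (simp add: quat_eq_iff algebra_simps)
  show "r *\<^sub>R s *\<^sub>R x = (r * s) *\<^sub>R x" by (simp add: quat_eq_iff algebra_simps)
  show "1 *\<^sub>R x = x" by (simp add: quat_eq_iff)
qed
end

instantiation quat :: "{real_inner, inverse}"
begin

definition "norm x = sqrt (nsq x)"
definition quat_sgn_def: "sgn x = x /\<^sub>R norm x" for x :: quat
definition dist_quat_def: "dist x y = norm (x - y)" for x y :: quat
definition uniformity_quat_def:
  "(uniformity :: (quat \<times> quat) filter) = (INF e\<in>{0 <..}. principal {(x, y). dist x y < e})"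
definition open_quat_def:
  "open (U :: quat set) \<longleftrightarrow> (\<forall>x\<in>U. eventually (\<lambda>(x', y). x' = x \<longrightarrow> y \<in> U) uniformity)"
definition "inner x y = Re x * Re y + Im1 x * Im1 y + Im2 x * Im2 y + Im3 x * Im3 y"
definition "inverse x = Quat (Re x / nsq x) (- Im1 x / nsq x) (- Im2 x / nsq x) (- Im3 x / nsq x)"
definition "divide x y = x * inverse y" for x y :: quat

instance
proof
  fix x y z :: quat and r s :: real
  show "inner x y = inner y x" by (simp add: inner_quat_def algebra_simps)
  show "inner (x + y) z = inner x z + inner y z" by (simp add: inner_quat_def algebra_simps)
  show "inner (r *\<^sub>R x) y = r * inner x y" by (simp add: inner_quat_def algebra_simps)
  show "0 \<le> inner x x" by (simp add: inner_quat_def)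
  show "inner x x = 0 \<longleftrightarrow> x = 0"
    using nsq_eq0[of x] by (simp add: inner_quat_def nsq_def power2_eq_square)
  show "norm x = sqrt (inner x x)" by (simp add: norm_quat_def inner_quat_def nsq_def power2_eq_square)
qed (rule quat_sgn_def dist_quat_def open_quat_def uniformity_quat_def)+

end

lemma inverse_simps [simp]:
  "Re (inverse x) = Re x / nsq x" "Im1 (inverse x) = - Im1 x / nsq x"
  "Im2 (inverse x) = - Im2 x / nsq x" "Im3 (inverse x) = - Im3 x / nsq x"
  by (simp_all add: inverse_quat_def)

lemma scaleR_mult_left_q: "(r *\<^sub>R a) * b = r *\<^sub>R (a * b)" for a b :: quat
  by (simp add: quat_eq_iff algebra_simps)
lemma scaleR_mult_right_q: "a * (r *\<^sub>R b) = r *\<^sub>R (a * b)" for a b :: quat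
  by (simp add: quat_eq_iff algebra_simps)

lemma inverse_quat_alt: "inverse x = (1 / nsq x) *\<^sub>R qcnj x"
  by (simp add: quat_eq_iff)

lemma qcnj_mult_self0: "qcnj x * x = Quat (nsq x) 0 0 0"
  by (simp add: quat_eq_iff nsq_def power2_eq_square algebra_simps)
lemma mult_qcnj0: "x * qcnj x = Quat (nsq x) 0 0 0"
  by (simp add: quat_eq_iff nsq_def power2_eq_square algebra_simps)

instance quat :: division_ring
proof
  fix x y :: quat
  assume "x \<noteq> 0"
  then have n: "nsq x \<noteq> 0" by (simp add: nsq_eq0)
  show "inverse x * x = 1"
    using n by (simp add: inverse_quat_alt scaleR_mult_left_q qcnj_mult_self0 quat_eq_iff)
  show "x * inverse x = 1"
    using n by (simp add: inverse_quat_alt scaleR_mult_right_q mult_qcnj0 quat_eq_iff)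
next
  fix x y :: quat
  show "x / y = x * inverse y" by (simp add: divide_quat_def)
  show "inverse (0::quat) = 0" by (simp add: quat_eq_iff)
qed

instance quat :: real_algebra_1
proof
  fix a :: real and x y :: quat
  show "a *\<^sub>R x * y = a *\<^sub>R (x * y)" by (simp add: quat_eq_iff algebra_simps)
  show "x * a *\<^sub>R y = a *\<^sub>R (x * y)" by (simp add: quat_eq_iff algebra_simps)
qed

definition qi :: quat where "qi = Quat 0 1 0 0"
definition qj :: quat where "qj = Quat 0 0 1 0"
definition qk :: quat where "qk = Quat 0 0 0 1"

instantiation quat :: euclidean_space
begin
definition Basis_quat_def: "Basis = {1, qi, qj, qk}"
instance
proof
  fix x u v :: quat
  show "(Basis::quat set) \<noteq> {}" by (simp add: Basis_quat_def)
  show "finite (Basis::quat set)" by (simp add: Basis_quat_def)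
  show "u \<in> Basis \<Longrightarrow> v \<in> Basis \<Longrightarrow> inner u v = (if u = v then 1 else 0)"
    unfolding Basis_quat_def qi_def qj_def qk_def
    by (elim insertE emptyE; simp add: inner_quat_def quat_eq_iff)
  have z: "x = 0 \<longleftrightarrow> Re x = 0 \<and> Im1 x = 0 \<and> Im2 x = 0 \<and> Im3 x = 0"
    by (simp add: quat_eq_iff)
  show "(\<forall>u\<in>Basis. inner x u = 0) \<longleftrightarrow> x = 0"
    unfolding z by (simp add: Basis_quat_def qi_def qj_def qk_def inner_quat_def)
qed
end

lemma of_real_simps [simp]:
  "Re (of_real r) = r" "Im1 (of_real r) = 0" "Im2 (of_real r) = 0" "Im3 (of_real r) = 0"
  by (simp_all add: of_real_def)

lemma qcnj_qcnj [simp]: "qcnj (qcnj x) = x" by (simp add: quat_eq_iff)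
lemma qcnj_add [simp]: "qcnj (x + y) = qcnj x + qcnj y" by (simp add: quat_eq_iff)
lemma qcnj_diff [simp]: "qcnj (x - y) = qcnj x - qcnj y" by (simp add: quat_eq_iff)
lemma qcnj_minus [simp]: "qcnj (- x) = - qcnj x" by (simp add: quat_eq_iff)
lemma qcnj_0 [simp]: "qcnj 0 = 0" by (simp add: quat_eq_iff)
lemma qcnj_1 [simp]: "qcnj 1 = 1" by (simp add: quat_eq_iff)
lemma qcnj_mult: "qcnj (x * y) = qcnj y * qcnj x" by (simp add: quat_eq_iff algebra_simps)
lemma qcnj_of_real [simp]: "qcnj (of_real r) = of_real r" by (simp add: quat_eq_iff)
lemma qcnj_eq0 [simp]: "qcnj x = 0 \<longleftrightarrow> x = 0" by (simp add: quat_eq_iff)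
lemma qcnj_sum: "qcnj (sum f A) = sum (\<lambda>i. qcnj (f i)) A"
  by (induction A rule: infinite_finite_induct) auto
lemma qcnj_inverse: "qcnj (inverse x) = inverse (qcnj x)"
  by (simp add: quat_eq_iff nsq_def)
lemma mult_qcnj: "x * qcnj x = of_real (nsq x)" by (simp add: quat_eq_iff nsq_def power2_eq_square)
lemma qcnj_mult_self: "qcnj x * x = of_real (nsq x)" by (simp add: quat_eq_iff nsq_def power2_eq_square algebra_simps)

definition qreal :: "quat \<Rightarrow> bool" where "qreal x \<longleftrightarrow> qcnj x = x"

lemma qreal_iff: "qreal x \<longleftrightarrow> x = of_real (Re x)"
  by (auto simp add: qreal_def quat_eq_iff)

lemma qreal_commute: "qreal c \<Longrightarrow> c * x = x * c"
  by (auto simp add: qreal_def quat_eq_iff algebra_simps)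

lemma qreal_of_real [simp]: "qreal (of_real r)" by (simp add: qreal_def)

lemma Re_eq_imp_eq: "(\<And>c. Re (a * c) = Re (b * c)) \<Longrightarrow> a = b"
proof -
  assume h: "\<And>c. Re (a * c) = Re (b * c)"
  from h[of 1] h[of qi] h[of qj] h[of qk] show "a = b"
    by (simp add: quat_eq_iff qi_def qj_def qk_def)
qed

lemma inner_quat_Re: "inner x y = Re (qcnj y * x)"
  by (simp add: inner_quat_def)

lemma scaleR_quat_of_real: "r *\<^sub>R x = x * of_real r" for x :: quat
  by (rule quat_eqI) simp_all


section \<open>Quaternion vectors, right scalar multiplication, forms\<close>

definition vsr :: "quat^'n \<Rightarrow> quat \<Rightarrow> quat^'n" where
  "vsr x c = (\<chi> k. x$k * c)"

lemma vsr_nth [simp]: "vsr x c $ k = x$k * c" by (simp add: vsr_def)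

lemma vsr_add_left: "vsr (x + y) c = vsr x c + vsr y c"
  by (simp add: vec_eq_iff algebra_simps)
lemma vsr_add_right: "vsr x (c + d) = vsr x c + vsr x d"
  by (simp add: vec_eq_iff algebra_simps)
lemma vsr_diff_left: "vsr (x - y) c = vsr x c - vsr y c"
  by (simp add: vec_eq_iff algebra_simps)
lemma vsr_diff_right: "vsr x (c - d) = vsr x c - vsr x d"
  by (simp add: vec_eq_iff algebra_simps)
lemma vsr_minus_left: "vsr (- x) c = - vsr x c"
  by (simp add: vec_eq_iff)
lemma vsr_minus_right: "vsr x (- c) = - vsr x c"
  by (simp add: vec_eq_iff)
lemma vsr_vsr [simp]: "vsr (vsr x c) d = vsr x (c * d)"
  by (simp add: vec_eq_iff mult.assoc)
lemma vsr_1 [simp]: "vsr x 1 = x" by (simp add: vec_eq_iff)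
lemma vsr_0 [simp]: "vsr x 0 = 0" by (simp add: vec_eq_iff)
lemma vsr_zero [simp]: "vsr 0 c = 0" by (simp add: vec_eq_iff)
lemma vsr_sum_left: "vsr (sum f A) c = sum (\<lambda>i. vsr (f i) c) A"
  by (induction A rule: infinite_finite_induct) (auto simp: vsr_add_left)
lemma vsr_sum_right: "vsr x (sum f A) = sum (\<lambda>i. vsr x (f i)) A"
  by (induction A rule: infinite_finite_induct) (auto simp: vsr_add_right)

lemma scaleR_vsr: "r *\<^sub>R x = vsr x (of_real r)" for x :: "quat^'n"
  by (simp add: vec_eq_iff scaleR_quat_of_real)

lemma mv_vsr: "M *v vsr x c = vsr (M *v x) c"
  by (simp add: vec_eq_iff matrix_vector_mult_def sum_distrib_right mult.assoc)

lemma mv_sum: "M *v sum f A = sum (\<lambda>i. M *v f i) A"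
  by (induction A rule: infinite_finite_induct) (auto simp: matrix_vector_right_distrib)

lemma mv_minus: "M *v (- x) = - (M *v x)" for M :: "quat^'n^'m"
  by (simp add: vec_eq_iff matrix_vector_mult_def sum_negf)

lemma mv_add_left: "(A + B) *v x = A *v x + B *v x" for A :: "quat^'n^'m"
  by (simp add: vec_eq_iff matrix_vector_mult_def sum.distrib algebra_simps)
lemma mv_diff_left: "(A - B) *v x = A *v x - B *v x" for A :: "quat^'n^'m"
  by (simp add: vec_eq_iff matrix_vector_mult_def sum_subtractf algebra_simps)

lemma mv_mat1 [simp]: "mat 1 *v x = x" for x :: "quat^'n"
  by simp

definition sip :: "quat^'n \<Rightarrow> quat^'n \<Rightarrow> quat" where
  "sip x u = (\<Sum>k\<in>UNIV. qcnj (u$k) * x$k)"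

lemma sip_add_left: "sip (x + y) u = sip x u + sip y u"
  by (simp add: sip_def sum.distrib algebra_simps)
lemma sip_diff_left: "sip (x - y) u = sip x u - sip y u"
  by (simp add: sip_def sum_subtractf algebra_simps)
lemma sip_minus_left: "sip (- x) u = - sip x u"
  by (simp add: sip_def sum_negf)
lemma sip_zero_left [simp]: "sip 0 u = 0"
  by (simp add: sip_def)
lemma sip_vsr_left: "sip (vsr x c) u = sip x u * c"
  by (simp add: sip_def sum_distrib_right mult.assoc)
lemma sip_add_right: "sip x (u + v) = sip x u + sip x v"
  by (simp add: sip_def sum.distrib algebra_simps)
lemma sip_diff_right: "sip x (u - v) = sip x u - sip x v"
  by (simp add: sip_def sum_subtractf algebra_simps)
lemma sip_zero_right [simp]: "sip x 0 = 0"
  by (simp add: sip_def)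
lemma sip_vsr_right: "sip x (vsr u c) = qcnj c * sip x u"
  by (simp add: sip_def sum_distrib_left qcnj_mult mult.assoc)
lemma sip_sum_left: "sip (sum f A) u = sum (\<lambda>i. sip (f i) u) A"
  by (induction A rule: infinite_finite_induct) (auto simp: sip_add_left)
lemma sip_sum_right: "sip x (sum f A) = sum (\<lambda>i. sip x (f i)) A"
  by (induction A rule: infinite_finite_induct) (auto simp: sip_add_right)
lemma qcnj_sip: "qcnj (sip x u) = sip u x"
  by (simp add: sip_def qcnj_sum qcnj_mult)

lemma qRe_sum: "Re (sum f A) = (\<Sum>i\<in>A. Re (f i))"
  by (induction A rule: infinite_finite_induct) auto

lemma inner_vec_sip: "inner x u = Re (sip x u)" for x u :: "quat^'n"
  by (simp add: inner_vec_def sip_def qRe_sum inner_quat_Re)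

lemma mult_if_10 [simp]: "x * (if P then 1 else 0) = (if P then x else (0::quat))"
  by simp
lemma qcnj_if10 [simp]: "qcnj (if P then 1 else 0) = (if P then 1 else 0)"
  by simp
lemma if_10_mult [simp]: "(if P then 1 else 0) * x = (if P then x else (0::quat))"
  by simp

lemma sip_self_zero: "sip x x = 0 \<Longrightarrow> x = 0"
proof -
  assume "sip x x = 0"
  then have "inner x x = 0" by (simp add: inner_vec_sip)
  then show "x = 0" by simp
qed

definition qf :: "quat^'n^'n \<Rightarrow> quat^'n \<Rightarrow> quat^'n \<Rightarrow> quat" where
  "qf H x y = sip (H *v x) y"

lemma qf_add_left: "qf H (x + y) z = qf H x z + qf H y z"
  by (simp add: qf_def matrix_vector_right_distrib sip_add_left)
lemma qf_diff_left: "qf H (x - y) z = qf H x z - qf H y z"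
  by (simp add: qf_def matrix_vector_mult_diff_distrib sip_diff_left)
lemma qf_minus_left: "qf H (- x) z = - qf H x z"
  by (simp add: qf_def mv_minus sip_minus_left)
lemma qf_zero_left [simp]: "qf H 0 z = 0"
  by (simp add: qf_def)
lemma qf_vsr_left: "qf H (vsr x c) z = qf H x z * c"
  by (simp add: qf_def mv_vsr sip_vsr_left)
lemma qf_add_right: "qf H z (x + y) = qf H z x + qf H z y"
  by (simp add: qf_def sip_add_right)
lemma qf_diff_right: "qf H z (x - y) = qf H z x - qf H z y"
  by (simp add: qf_def sip_diff_right)
lemma qf_zero_right [simp]: "qf H z 0 = 0"
  by (simp add: qf_def)
lemma qf_minus_right: "qf H z (- x) = - qf H z x"
  using qf_diff_right[of H z 0 x] by simp
lemma qf_vsr_right: "qf H z (vsr x c) = qcnj c * qf H z x"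
  by (simp add: qf_def sip_vsr_right)
lemma qf_sum_left: "qf H (sum f A) z = sum (\<lambda>i. qf H (f i) z) A"
  by (induction A rule: infinite_finite_induct) (auto simp: qf_add_left)
lemma qf_sum_right: "qf H z (sum f A) = sum (\<lambda>i. qf H z (f i)) A"
  by (induction A rule: infinite_finite_induct) (auto simp: qf_add_right)

lemmas qf_lin = qf_add_left qf_diff_left qf_minus_left qf_vsr_left
  qf_add_right qf_diff_right qf_minus_right qf_vsr_right

lemma qf_expand: "qf H x y = (\<Sum>k\<in>UNIV. \<Sum>j\<in>UNIV. qcnj (y$k) * H$k$j * x$j)"
  by (simp add: qf_def sip_def matrix_vector_mult_def sum_distrib_left mult.assoc)

lemma cstar_nth [simp]: "cstar A $ i $ j = qcnj (A $ j $ i)"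
  by (simp add: cstar_def)

lemma qf_herm:
  assumes "cstar H = H"
  shows "qcnj (qf H x y) = qf H y x"
proof -
  have h: "qcnj (H$k$j) = H$j$k" for k j
    using arg_cong[OF assms, of "\<lambda>M. M$j$k"] by simp
  have "qcnj (qf H x y) = (\<Sum>k\<in>UNIV. \<Sum>j\<in>UNIV. qcnj (x$j) * H$j$k * y$k)"
    by (simp add: qf_expand qcnj_sum qcnj_mult h mult.assoc)
  also have "\<dots> = (\<Sum>j\<in>UNIV. \<Sum>k\<in>UNIV. qcnj (x$j) * H$j$k * y$k)"
    by (rule sum.swap)
  also have "\<dots> = qf H y x" by (simp add: qf_expand)
  finally show ?thesis .
qed

lemma qf_herm_real: "cstar H = H \<Longrightarrow> qreal (qf H x x)"
  using qf_herm[of H x x] by (simp add: qreal_def)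

lemma cstar_cstar [simp]: "cstar (cstar A) = A"
  by (simp add: vec_eq_iff)

lemma cstar_mult: "cstar (A ** B) = cstar B ** cstar A" for A :: "quat^'n^'m" and B :: "quat^'k^'n"
  by (simp add: vec_eq_iff matrix_matrix_mult_def qcnj_sum qcnj_mult)

lemma qf_mv_left: "qf H (A *v x) y = qf (H ** A) x y"
  by (simp add: qf_def matrix_vector_mul_assoc)

lemma sip_mv_right: "sip x (B *v y) = sip (cstar B *v x) y"
proof -
  have "sip x (B *v y) = (\<Sum>k\<in>UNIV. \<Sum>j\<in>UNIV. qcnj (y$j) * qcnj (B$k$j) * x$k)"
    by (simp add: sip_def matrix_vector_mult_def qcnj_sum qcnj_mult sum_distrib_right)
  also have "\<dots> = (\<Sum>j\<in>UNIV. \<Sum>k\<in>UNIV. qcnj (y$j) * qcnj (B$k$j) * x$k)"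
    by (rule sum.swap)
  also have "\<dots> = sip (cstar B *v x) y"
    by (simp add: sip_def matrix_vector_mult_def sum_distrib_left mult.assoc)
  finally show ?thesis .
qed

lemma qf_mv_right: "qf H x (B *v y) = qf (cstar B ** H) x y"
  by (simp add: qf_def sip_mv_right matrix_vector_mul_assoc)

lemma qf_mv_both: "qf H (A *v x) (B *v y) = qf (cstar B ** H ** A) x y" for A B :: "quat^'n^'n"
proof -
  have "qf H (A *v x) (B *v y) = qf (cstar B ** H) (A *v x) y" by (rule qf_mv_right)
  also have "\<dots> = qf (cstar B ** H ** A) x y" by (rule qf_mv_left)
  finally show ?thesis .
qed

lemma qf_axis: "qf M (axis j 1) (axis i 1) = M$i$j"
proof -
  have "qf M (axis j 1) (axis i 1) = (\<Sum>k\<in>UNIV. \<Sum>l\<in>UNIV. qcnj (axis i 1 $ k) * M$k$l * axis j 1 $ l)"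
    by (rule qf_expand)
  also have "\<dots> = (\<Sum>k\<in>UNIV. qcnj (axis i 1 $ k) * M$k$j)"
    by (simp add: axis_def)
  also have "\<dots> = M$i$j"
    by (simp add: axis_def)
  finally show ?thesis .
qed

lemma qf_determines: "(\<And>x y. qf M x y = qf N x y) \<Longrightarrow> M = N"
  by (metis qf_axis vec_eq_iff)

definition comb :: "(nat \<Rightarrow> quat^'n) \<Rightarrow> nat \<Rightarrow> (nat \<Rightarrow> quat) \<Rightarrow> quat^'n" where
  "comb P m a = (\<Sum>i<m. vsr (P i) (a i))"

lemma qf_comb_left: "qf H (comb P m a) y = (\<Sum>i<m. qf H (P i) y * a i)"
  by (simp add: comb_def qf_sum_left qf_vsr_left)
lemma qf_comb_right: "qf H x (comb P m a) = (\<Sum>i<m. qcnj (a i) * qf H x (P i))"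
  by (simp add: comb_def qf_sum_right qf_vsr_right)
lemma mv_comb: "M *v comb P m a = comb (\<lambda>i. M *v P i) m a"
  by (simp add: comb_def mv_sum mv_vsr)

lemma comb_Suc: "comb P (Suc m) a = comb P m a + vsr (P m) (a m)"
  by (simp add: comb_def)

lemma comb_cong: "(\<And>i. i < m \<Longrightarrow> P i = P' i) \<Longrightarrow> (\<And>i. i < m \<Longrightarrow> a i = a' i) \<Longrightarrow> comb P m a = comb P' m a'"
  by (simp add: comb_def)

lemma comb_delta: "k < m \<Longrightarrow> comb P m (\<lambda>i. if i = k then c else 0) = vsr (P k) c"
  by (simp add: comb_def if_distrib cong: if_cong)

lemma comb_add: "comb P m (\<lambda>i. a i + b i) = comb P m a + comb P m b"
  by (simp add: comb_def vsr_add_right sum.distrib)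
lemma comb_diff: "comb P m (\<lambda>i. a i - b i) = comb P m a - comb P m b"
  by (simp add: comb_def vsr_diff_right sum_subtractf)
lemma comb_mult: "comb P m (\<lambda>i. a i * c) = vsr (comb P m a) c"
  by (simp add: comb_def vsr_sum_left)
lemma comb_add_fam: "comb (\<lambda>i. P i + R i) m a = comb P m a + comb R m a"
  by (simp add: comb_def vsr_add_left sum.distrib)
lemma comb_diff_fam: "comb (\<lambda>i. P i - R i) m a = comb P m a - comb R m a"
  by (simp add: comb_def vsr_diff_left sum_subtractf)


section \<open>Subspaces, nondegeneracy, decomposition, Fredholm\<close>

definition qsub :: "(quat^'n) set \<Rightarrow> bool" where
  "qsub V \<longleftrightarrow> subspace V \<and> (\<forall>x\<in>V. \<forall>c. vsr x c \<in> V)"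

definition nondeg :: "quat^'n^'n \<Rightarrow> (quat^'n) set \<Rightarrow> bool" where
  "nondeg H V \<longleftrightarrow> (\<forall>y\<in>V. (\<forall>x\<in>V. qf H x y = 0) \<longrightarrow> y = 0)"

definition hperp :: "quat^'n^'n \<Rightarrow> (quat^'n) set \<Rightarrow> (quat^'n) set" where
  "hperp H V = {y. \<forall>x\<in>V. qf H x y = 0}"

lemma invertible_inv:
  assumes "invertible H"
  shows "H ** matrix_inv H = mat 1" "matrix_inv H ** H = mat 1"
proof -
  have "\<exists>A'. H ** A' = mat 1 \<and> A' ** H = mat 1" using assms by (simp add: invertible_def)
  then have "H ** matrix_inv H = mat 1 \<and> matrix_inv H ** H = mat 1"
    unfolding matrix_inv_def by (rule someI_ex)
  then show "H ** matrix_inv H = mat 1" "matrix_inv H ** H = mat 1" by auto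
qed

lemma inv_mv_cancel:
  fixes H :: "quat^'n^'n"
  assumes "invertible H"
  shows "H *v (matrix_inv H *v x) = x" "matrix_inv H *v (H *v x) = x"
  by (simp_all add: matrix_vector_mul_assoc invertible_inv[OF assms])

lemma inv_mv_inj:
  fixes H :: "quat^'n^'n"
  assumes "invertible H" "H *v x = H *v y"
  shows "x = y"
  by (metis assms inv_mv_cancel(2))

lemma qf_nondeg_right:
  fixes H :: "quat^'n^'n"
  assumes "invertible H" "\<And>x. qf H x y = 0"
  shows "y = 0"
proof -
  have "sip (H *v (matrix_inv H *v y)) y = 0" using assms(2) by (simp add: qf_def)
  then have "sip y y = 0" by (simp add: inv_mv_cancel[OF assms(1)])
  then show ?thesis by (rule sip_self_zero)
qed

lemma qf_nondeg_left:
  fixes H :: "quat^'n^'n"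
  assumes "invertible H" "\<And>y. qf H x y = 0"
  shows "x = 0"
proof -
  have "sip (H *v x) (H *v x) = 0" using assms(2) by (simp add: qf_def)
  then have "H *v x = 0" by (rule sip_self_zero)
  then have "H *v x = H *v 0" by simp
  then show ?thesis by (rule inv_mv_inj[OF assms(1)])
qed

lemma nondeg_UNIV: "invertible H \<Longrightarrow> nondeg H UNIV"
  unfolding nondeg_def using qf_nondeg_right by blast

lemma qsub_UNIV: "qsub UNIV"
  by (simp add: qsub_def)

lemma qsubD: "qsub V \<Longrightarrow> subspace V"
  "qsub V \<Longrightarrow> x \<in> V \<Longrightarrow> vsr x c \<in> V"
  by (auto simp: qsub_def)

lemma qsub_0: "qsub V \<Longrightarrow> 0 \<in> V"
  by (simp add: qsub_def subspace_0)
lemma qsub_add: "qsub V \<Longrightarrow> x \<in> V \<Longrightarrow> y \<in> V \<Longrightarrow> x + y \<in> V"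
  by (simp add: qsub_def subspace_add)
lemma qsub_diff: "qsub V \<Longrightarrow> x \<in> V \<Longrightarrow> y \<in> V \<Longrightarrow> x - y \<in> V"
  by (simp add: qsub_def subspace_diff)
lemma qsub_sum: "qsub V \<Longrightarrow> (\<And>i. i \<in> A \<Longrightarrow> f i \<in> V) \<Longrightarrow> sum f A \<in> V"
  by (simp add: qsub_def subspace_sum)
lemma qsub_comb: "qsub V \<Longrightarrow> (\<And>i. i < m \<Longrightarrow> P i \<in> V) \<Longrightarrow> comb P m a \<in> V"
  unfolding comb_def by (rule qsub_sum) (auto intro: qsubD)

lemma qsub_intro:
  assumes "0 \<in> V" "\<And>x y. x \<in> V \<Longrightarrow> y \<in> V \<Longrightarrow> x + y \<in> V" "\<And>x c. x \<in> V \<Longrightarrow> vsr x c \<in> V"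
  shows "qsub V"
  unfolding qsub_def subspace_def using assms by (auto simp: scaleR_vsr)

lemma Re_zero_all:
  assumes "\<And>c. Re (a * c) = 0"
  shows "a = 0"
  using Re_eq_imp_eq[of a 0] assms by simp

lemma hperp_Re:
  assumes "qsub V"
  shows "hperp H V = {y. \<forall>x\<in>V. Re (qf H x y) = 0}"
proof (auto simp: hperp_def)
  fix y x assume h: "\<forall>x\<in>V. Re (qf H x y) = 0" and x: "x \<in> V"
  have "Re (qf H x y * c) = 0" for c
  proof -
    have "Re (qf H (vsr x c) y) = 0" using h qsubD(2)[OF assms x, of c] by blast
    then show ?thesis by (simp only: qf_vsr_left)
  qed
  then show "qf H x y = 0" by (rule Re_zero_all)
qed

lemma linear_mv: "linear (\<lambda>x. (H::quat^'n^'m) *v x)"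
  by (rule linearI) (simp_all add: matrix_vector_right_distrib scaleR_vsr mv_vsr)

lemma qdecomp:
  fixes H :: "quat^'n^'n"
  assumes H: "invertible H" and V: "qsub V" and nd: "nondeg H V"
  shows "\<exists>z\<in>V. w - z \<in> hperp H V"
proof -
  let ?A = "(\<lambda>x. H *v x) ` V"
  let ?W = "{y \<in> UNIV. \<forall>a\<in>?A. orthogonal a y}"
  have sV: "subspace V" using V by (simp add: qsub_def)
  have sA: "subspace ?A" by (rule linear_subspace_image[OF linear_mv sV])
  have W: "?W = hperp H V"
    unfolding hperp_Re[OF V] by (auto simp: orthogonal_def inner_vec_sip qf_def)
  have d1: "dim ?W + dim ?A = dim (UNIV :: (quat^'n) set)"
    by (rule dim_subspace_orthogonal_to_vectors[OF sA subspace_UNIV]) simp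
  have injH: "inj_on (\<lambda>x. H *v x) (span V)"
    by (auto simp: inj_on_def intro: inv_mv_inj[OF H])
  have d2: "dim ?A = dim V" by (rule dim_image_eq[OF linear_mv injH])
  have sW: "subspace (hperp H V)"
    unfolding subspace_def hperp_def by (auto simp: qf_add_right scaleR_vsr qf_vsr_right)
  have int: "V \<inter> hperp H V = {0}"
    using nd sV by (auto simp: nondeg_def hperp_def subspace_0)
  have "dim {x + y |x y. x \<in> V \<and> y \<in> hperp H V} + dim (V \<inter> hperp H V) = dim V + dim (hperp H V)"
    by (rule dim_sums_Int[OF sV sW])
  then have "dim {x + y |x y. x \<in> V \<and> y \<in> hperp H V} = DIM(quat^'n)"
    using d1 d2 W int by (simp add: dim_UNIV)
  then have "span {x + y |x y. x \<in> V \<and> y \<in> hperp H V} = UNIV"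
    by (rule dim_eq_full[THEN iffD1])
  moreover have "span {x + y |x y. x \<in> V \<and> y \<in> hperp H V} = {x + y |x y. x \<in> V \<and> y \<in> hperp H V}"
    by (rule span_eq_iff[THEN iffD2, OF subspace_sums[OF sV sW]])
  ultimately have "w \<in> {x + y |x y. x \<in> V \<and> y \<in> hperp H V}" by simp
  then obtain z y where "w = z + y" "z \<in> V" "y \<in> hperp H V" by blast
  then show ?thesis by (intro bexI[of _ z]) auto
qed

lemma fredholm:
  fixes Q :: "nat \<Rightarrow> quat^'n" and \<alpha> :: "nat \<Rightarrow> quat"
  assumes cons: "\<And>a. comb Q m a = 0 \<Longrightarrow> (\<Sum>i<m. \<alpha> i * a i) = 0"
  shows "\<exists>u. \<forall>i<m. sip (Q i) u = \<alpha> i"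
proof -
  define S where "S = range (comb Q m)"
  define ell where "ell x = (\<Sum>i<m. \<alpha> i * (SOME a. x = comb Q m a) i)" for x
  have lq: "ell (comb Q m a) = (\<Sum>i<m. \<alpha> i * a i)" for a
  proof -
    define b where "b = (SOME b. comb Q m a = comb Q m b)"
    have "comb Q m a = comb Q m b" unfolding b_def by (rule someI[of _ a]) simp
    then have "comb Q m (\<lambda>i. a i - b i) = 0" by (simp add: comb_diff)
    then have "(\<Sum>i<m. \<alpha> i * (a i - b i)) = 0" by (rule cons)
    then have "(\<Sum>i<m. \<alpha> i * a i) = (\<Sum>i<m. \<alpha> i * b i)"
      by (simp add: right_diff_distrib sum_subtractf)
    then show ?thesis by (simp add: ell_def b_def)
  qed
  have S0: "comb Q m a \<in> S" for a by (simp add: S_def)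
  have sS: "subspace S"
  proof (unfold subspace_def, intro conjI ballI allI)
    show "0 \<in> S" using S0[of "\<lambda>_. 0"] by (simp add: comb_def)
  next
    fix x y assume "x \<in> S" "y \<in> S"
    then obtain a b where "x = comb Q m a" "y = comb Q m b" by (auto simp: S_def)
    then show "x + y \<in> S" using S0[of "\<lambda>i. a i + b i"] by (simp add: comb_add)
  next
    fix r :: real and x assume "x \<in> S"
    then obtain a where "x = comb Q m a" by (auto simp: S_def)
    then show "r *\<^sub>R x \<in> S" using S0[of "\<lambda>i. a i * of_real r"] by (simp add: comb_mult scaleR_vsr)
  qed
  define f where "f x = Re (ell x)" for x
  obtain B where B: "B \<subseteq> S" "independent B" "S \<subseteq> span B" "card B = dim S"
    using basis_exists by blast
  obtain g where g: "linear g" "\<forall>x\<in>B. g x = f x"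
    using linear_independent_extend[OF B(2)] by blast
  have gf: "\<forall>x\<in>S. g x = f x"
  proof
    fix x assume "x \<in> S"
    then have "x \<in> span B" using B(3) by blast
    then have "x \<in> S \<and> g x = f x"
    proof (rule span_induct)
      show "subspace {x. x \<in> S \<and> g x = f x}"
      proof (unfold subspace_def, intro conjI ballI allI)
        show "0 \<in> {x. x \<in> S \<and> g x = f x}"
          using lq[of "\<lambda>_. 0"] sS by (simp add: f_def linear_0[OF g(1)] subspace_0 comb_def)
      next
        fix x y assume "x \<in> {x. x \<in> S \<and> g x = f x}" "y \<in> {x. x \<in> S \<and> g x = f x}"
        then obtain a b where ab: "x = comb Q m a" "y = comb Q m b" "g x = f x" "g y = f y"
          by (auto simp: S_def)
        have "f (x + y) = f x + f y"
          using lq[of "\<lambda>i. a i + b i"] lq[of a] lq[of b]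
          by (simp add: ab f_def comb_add[symmetric] distrib_left sum.distrib)
        then show "x + y \<in> {x. x \<in> S \<and> g x = f x}"
          using ab S0[of "\<lambda>i. a i + b i"] by (simp add: comb_add linear_add[OF g(1)])
      next
        fix r :: real and x assume "x \<in> {x. x \<in> S \<and> g x = f x}"
        then obtain a where ab: "x = comb Q m a" "g x = f x" by (auto simp: S_def)
        have e: "r *\<^sub>R x = comb Q m (\<lambda>i. a i * of_real r)" by (simp add: ab comb_mult scaleR_vsr)
        have "f (r *\<^sub>R x) = r * f x"
          unfolding e using lq[of "\<lambda>i. a i * of_real r"] lq[of a]
          by (simp add: ab f_def mult.assoc[symmetric] sum_distrib_right[symmetric] qRe_sum sum_distrib_left
              mult.commute)
        then have "g (r *\<^sub>R x) = f (r *\<^sub>R x)"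
          using linear_scale[OF g(1), of r x] ab(2) by simp
        moreover have "r *\<^sub>R x \<in> S" using e S0 by simp
        ultimately show "r *\<^sub>R x \<in> {x. x \<in> S \<and> g x = f x}" by simp
      qed
    next
      fix x assume "x \<in> B" then show "x \<in> S \<and> g x = f x" using B(1) g(2) by auto
    qed
    then show "g x = f x" by simp
  qed
  define u where "u = (\<Sum>b\<in>Basis. g b *\<^sub>R b)"
  have gu: "g x = inner x u" for x
  proof -
    have "g x = g (\<Sum>b\<in>Basis. (inner x b) *\<^sub>R b)" by (simp add: euclidean_representation)
    also have "\<dots> = (\<Sum>b\<in>Basis. inner x b * g b)"
      by (simp add: linear_sum[OF g(1)] linear_scale[OF g(1)])
    also have "\<dots> = inner x u" by (simp add: u_def inner_sum_right mult.commute)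
    finally show ?thesis .
  qed
  have "sip (Q i) u = \<alpha> i" if i: "i < m" for i
  proof (rule Re_eq_imp_eq)
    fix c
    have e: "vsr (Q i) c = comb Q m (\<lambda>j. if j = i then c else 0)" by (simp add: comb_delta i)
    have "ell (vsr (Q i) c) = \<alpha> i * c"
      unfolding e lq using i by (simp add: if_distrib cong: if_cong)
    then have "Re (\<alpha> i * c) = f (vsr (Q i) c)" by (simp add: f_def)
    also have "\<dots> = g (vsr (Q i) c)" using gf e S0 by simp
    also have "\<dots> = Re (sip (Q i) u * c)" by (simp add: gu inner_vec_sip sip_vsr_left)
    finally show "Re (sip (Q i) u * c) = Re (\<alpha> i * c)" by simp
  qed
  then show ?thesis by blast
qed

lemma sip_mv_left_herm:
  fixes H :: "quat^'n^'n"
  assumes "cstar H = H"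
  shows "sip (H *v x) w = sip x (H *v w)"
proof -
  have "sip (H *v x) w = qcnj (sip w (H *v x))" by (simp add: qcnj_sip)
  also have "\<dots> = qcnj (sip (H *v w) x)" by (simp add: sip_mv_right assms)
  also have "\<dots> = sip x (H *v w)" by (simp add: qcnj_sip)
  finally show ?thesis .
qed

lemma riesz_sub:
  fixes H :: "quat^'n^'n" and Q :: "nat \<Rightarrow> quat^'n"
  assumes H: "invertible H" "cstar H = H" and V: "qsub V" "nondeg H V"
    and QV: "\<And>i. i < m \<Longrightarrow> Q i \<in> V"
    and cons: "\<And>a. comb Q m a = 0 \<Longrightarrow> (\<Sum>i<m. \<alpha> i * a i) = 0"
  shows "\<exists>z\<in>V. \<forall>i<m. qf H (Q i) z = \<alpha> i"
proof -
  obtain u where u: "\<forall>i<m. sip (Q i) u = \<alpha> i" using fredholm[OF cons] by blast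
  define w where "w = matrix_inv H *v u"
  have qw: "qf H x w = sip x u" for x
    by (simp add: qf_def sip_mv_left_herm[OF H(2)] w_def inv_mv_cancel[OF H(1)])
  obtain z where z: "z \<in> V" "w - z \<in> hperp H V" using qdecomp[OF H(1) V] by blast
  have "qf H (Q i) z = \<alpha> i" if "i < m" for i
  proof -
    have "qf H (Q i) (w - z) = 0" using z(2) QV[OF that] by (simp add: hperp_def)
    then have "qf H (Q i) z = qf H (Q i) w" by (simp add: qf_diff_right)
    then show ?thesis using qw u that by simp
  qed
  then show ?thesis using z(1) by blast
qed


section \<open>Elementary isometries\<close>

instance quat :: real_div_algebra ..

definition outer :: "quat^'n \<Rightarrow> quat^'n \<Rightarrow> quat^'n^'n" where
  "outer u r = (\<chi> i j. u$i * r$j)"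

definition fvec :: "quat^'n^'n \<Rightarrow> quat^'n \<Rightarrow> quat^'n" where
  "fvec H p = (\<chi> j. \<Sum>k\<in>UNIV. qcnj (p$k) * H$k$j)"

lemma outer_mv: "outer u (fvec H p) *v x = vsr u (qf H x p)"
proof -
  have "(\<Sum>j\<in>UNIV. (\<Sum>k\<in>UNIV. qcnj (p$k) * H$k$j) * x$j) = (\<Sum>j\<in>UNIV. \<Sum>k\<in>UNIV. qcnj (p$k) * H$k$j * x$j)"
    by (simp add: sum_distrib_right)
  also have "\<dots> = (\<Sum>k\<in>UNIV. \<Sum>j\<in>UNIV. qcnj (p$k) * H$k$j * x$j)"
    by (rule sum.swap)
  finally have sw: "(\<Sum>j\<in>UNIV. (\<Sum>k\<in>UNIV. qcnj (p$k) * H$k$j) * x$j) = (\<Sum>k\<in>UNIV. \<Sum>j\<in>UNIV. qcnj (p$k) * H$k$j * x$j)" .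
  have "(outer u (fvec H p) *v x) $ i = vsr u (qf H x p) $ i" for i
  proof -
    have "(outer u (fvec H p) *v x) $ i = (\<Sum>j\<in>UNIV. u$i * (\<Sum>k\<in>UNIV. qcnj (p$k) * H$k$j) * x$j)"
      by (simp add: outer_def fvec_def matrix_vector_mult_def)
    also have "\<dots> = (\<Sum>j\<in>UNIV. u$i * ((\<Sum>k\<in>UNIV. qcnj (p$k) * H$k$j) * x$j))"
      by (simp only: mult.assoc)
    also have "\<dots> = u$i * (\<Sum>j\<in>UNIV. (\<Sum>k\<in>UNIV. qcnj (p$k) * H$k$j) * x$j)"
      by (rule sum_distrib_left[symmetric])
    also have "\<dots> = vsr u (qf H x p) $ i"
      unfolding sw by (simp add: qf_expand)
    finally show ?thesis .
  qed
  then show ?thesis by (simp add: vec_eq_iff)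
qed

definition Tm :: "quat^'n^'n \<Rightarrow> quat^'n \<Rightarrow> quat \<Rightarrow> quat^'n^'n" where
  "Tm H v s = mat 1 + outer (vsr v s) (fvec H v)"

lemma Tm_mv: "Tm H v s *v x = x + vsr v (s * qf H x v)"
  by (simp add: Tm_def mv_add_left outer_mv)

lemma Tm_iso:
  assumes herm: "cstar H = H" and s: "s + qcnj s + qcnj s * qf H v v * s = 0"
  shows "qf H (Tm H v s *v x) (Tm H v s *v y) = qf H x y"
proof -
  define a where "a = qf H x v"
  define b where "b = qf H y v"
  define c where "c = qf H v v"
  have vy: "qf H v y = qcnj b" using qf_herm[OF herm, of y v] by (simp add: b_def)
  have "qf H (Tm H v s *v x) (Tm H v s *v y) =
        qf H x y + qcnj (s * b) * a + qcnj b * (s * a) + qcnj (s * b) * c * (s * a)"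
    by (simp add: Tm_mv qf_lin vy a_def[symmetric] b_def[symmetric] c_def[symmetric] mult.assoc algebra_simps)
  also have "\<dots> = qf H x y + qcnj b * (s + qcnj s + qcnj s * c * s) * a"
    by (simp add: qcnj_mult algebra_simps)
  also have "\<dots> = qf H x y" using s by (simp add: c_def)
  finally show ?thesis .
qed

lemma Tm_preserves:
  assumes "qsub V" "v \<in> V" "x \<in> V"
  shows "Tm H v s *v x \<in> V"
  unfolding Tm_mv using assms by (intro qsub_add qsubD(2)) auto

definition isoOn :: "quat^'n^'n \<Rightarrow> (quat^'n) set \<Rightarrow> quat^'n^'n \<Rightarrow> bool" where
  "isoOn H V U \<longleftrightarrow> (\<forall>x\<in>V. U *v x \<in> V) \<and> (\<forall>x\<in>V. \<forall>y\<in>V. qf H (U *v x) (U *v y) = qf H x y)"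

definition giso :: "quat^'n^'n \<Rightarrow> quat^'n^'n \<Rightarrow> bool" where
  "giso H U \<longleftrightarrow> (\<forall>x y. qf H (U *v x) (U *v y) = qf H x y)"

lemma giso_comp: "giso H A \<Longrightarrow> giso H B \<Longrightarrow> giso H (A ** B)"
  by (simp add: giso_def matrix_vector_mul_assoc[symmetric])

lemma mv_neg_left: "(- A) *v x = - (A *v x)" for A :: "quat^'n^'m"
  by (simp add: vec_eq_iff matrix_vector_mult_def sum_negf)

lemma giso_neg: "giso H A \<Longrightarrow> giso H (- A)"
  by (simp add: giso_def mv_neg_left qf_minus_left qf_minus_right)

lemma qreal_Re: "qreal c \<Longrightarrow> c = of_real (Re c)"
  by (simp add: qreal_iff)

lemma reflection:
  assumes herm: "cstar H = H" and w: "qf H w w = of_real r" "r \<noteq> 0"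
    and p: "qf H p w = of_real (r / 2)"
  shows "giso H (Tm H w (of_real (-2 / r)))" "Tm H w (of_real (-2 / r)) *v p = p - w"
proof -
  have "of_real (-2 / r) + qcnj (of_real (-2 / r)) + qcnj (of_real (-2 / r)) * qf H w w * of_real (-2 / r) = (0::quat)"
    unfolding w of_real_mult[symmetric] of_real_add[symmetric] qcnj_of_real
    using w(2) by (simp add: field_simps)
  then show "giso H (Tm H w (of_real (-2 / r)))"
    unfolding giso_def using Tm_iso[OF herm] by blast
  have "of_real (-2 / r) * qf H p w = (-1::quat)"
    unfolding p of_real_mult[symmetric] using w(2) by simp
  then show "Tm H w (of_real (-2 / r)) *v p = p - w"
    by (simp add: Tm_mv vsr_minus_right)
qed

lemma rotation:
  assumes herm: "cstar H = H" and v: "qf H v v = of_real r" "r \<noteq> 0" and nu: "nsq \<nu> = 1"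
  shows "giso H (Tm H v ((\<nu> - 1) * of_real (1 / r)))"
    "Tm H v ((\<nu> - 1) * of_real (1 / r)) *v vsr v \<mu> = vsr v (\<nu> * \<mu>)"
proof -
  let ?s = "(\<nu> - 1) * of_real (1 / r)"
  let ?R = "of_real (1 / r) :: quat"
  have "qcnj ?s = ?R * (qcnj \<nu> - 1)" by (simp only: qcnj_mult qcnj_of_real qcnj_diff qcnj_1)
  also have "\<dots> = (qcnj \<nu> - 1) * ?R" by (rule qreal_commute) (rule qreal_of_real)
  finally have c1: "qcnj ?s = (qcnj \<nu> - 1) * ?R" .
  have c2a: "?R * of_real r = 1"
    by (simp only: of_real_mult[symmetric]) (simp add: v(2))
  have c2: "?R * (of_real r * z) = z" for z
    by (simp only: mult.assoc[symmetric] c2a mult_1_left)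
  have c3: "qcnj ?s * of_real r * ?s = (qcnj \<nu> - 1) * (\<nu> - 1) * ?R"
    unfolding c1 by (simp only: mult.assoc c2)
  have c4: "(qcnj \<nu> - 1) * (\<nu> - 1) = 2 - qcnj \<nu> - \<nu>"
    using qcnj_mult_self[of \<nu>] nu by (simp add: algebra_simps)
  have e1: "qcnj ?s * qf H v v * ?s = (2 - qcnj \<nu> - \<nu>) * ?R"
    unfolding v c3 c4 ..
  have "?s + qcnj ?s + qcnj ?s * qf H v v * ?s = (\<nu> - 1) * ?R + (qcnj \<nu> - 1) * ?R + (2 - qcnj \<nu> - \<nu>) * ?R"
    unfolding e1 by (simp only: c1)
  also have "\<dots> = ((\<nu> - 1) + (qcnj \<nu> - 1) + (2 - qcnj \<nu> - \<nu>)) * ?R"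
    by (simp only: distrib_right)
  also have "\<dots> = 0" by simp
  finally have "?s + qcnj ?s + qcnj ?s * qf H v v * ?s = 0" .
  then show "giso H (Tm H v ?s)"
    unfolding giso_def using Tm_iso[OF herm] by blast
  have e: "?s * qf H v v = \<nu> - 1"
    unfolding v by (simp only: mult.assoc c2a mult_1_right)
  have "Tm H v ?s *v vsr v \<mu> = vsr v \<mu> + vsr v (?s * qf H v v * \<mu>)"
    by (simp add: Tm_mv qf_vsr_left mult.assoc)
  also have "\<dots> = vsr v (\<nu> * \<mu>)"
    unfolding e by (simp add: vsr_add_right[symmetric] algebra_simps)
  finally show "Tm H v ?s *v vsr v \<mu> = vsr v (\<nu> * \<mu>)" .
qed


definition pres :: "(quat^'n) set \<Rightarrow> quat^'n^'n \<Rightarrow> bool" where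
  "pres V M \<longleftrightarrow> (\<forall>x\<in>V. M *v x \<in> V)"

lemma pres_comp: "pres V A \<Longrightarrow> pres V B \<Longrightarrow> pres V (A ** B)"
  by (simp add: pres_def matrix_vector_mul_assoc[symmetric])

lemma pres_neg: "qsub V \<Longrightarrow> pres V A \<Longrightarrow> pres V (- A)"
  unfolding pres_def mv_neg_left
  by (metis qsubD(2) vsr_1 vsr_minus_right)

lemma pres_Tm: "qsub V \<Longrightarrow> v \<in> V \<Longrightarrow> pres V (Tm H v s)"
  by (simp add: pres_def Tm_preserves)

lemma qreal_0 [simp]: "qreal 0" by (simp add: qreal_def)

lemma nsq_qcnj [simp]: "nsq (qcnj x) = nsq x" by (simp add: nsq_def)

lemma nsq_mult_real: "nsq (g * of_real t) = t^2 * nsq g"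
  by (simp add: nsq_def power_mult_distrib algebra_simps)

lemma exists_unit_real:
  "\<exists>\<mu>. nsq \<mu> = 1 \<and> qreal (qcnj \<mu> * g)"
proof (cases "g = 0")
  case True
  then show ?thesis by (intro exI[of _ 1]) (simp add: nsq_def)
next
  case False
  define N where "N = nsq g"
  have N: "N > 0" using False nsq_ge0[of g] nsq_eq0[of g] by (simp add: N_def)
  define \<mu> where "\<mu> = g * of_real (1 / sqrt N)"
  have "nsq \<mu> = (1 / sqrt N)^2 * N" unfolding \<mu>_def nsq_mult_real N_def ..
  also have "\<dots> = 1" using N by (simp add: power_divide)
  finally have n1: "nsq \<mu> = 1" .
  have "qcnj \<mu> * g = of_real (1 / sqrt N) * (qcnj g * g)"
    by (simp only: \<mu>_def qcnj_mult qcnj_of_real mult.assoc)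
  also have "\<dots> = of_real (1 / sqrt N) * of_real N" by (simp only: qcnj_mult_self N_def)
  also have "\<dots> = of_real (1 / sqrt N * N)" by (simp only: of_real_mult)
  finally have "qreal (qcnj \<mu> * g)" by (metis qreal_of_real)
  with n1 show ?thesis by blast
qed

lemma real_form:
  assumes "cstar H = H"
  shows "qf H x x = of_real (Re (qf H x x))"
  using qf_herm_real[OF assms] qreal_Re by blast

lemma move_vec:
  fixes H :: "quat^'n^'n"
  assumes herm: "cstar H = H" and V: "qsub V" and pV: "p \<in> V" and qV: "q \<in> V"
    and eq: "qf H p p = qf H q q" and nz: "qf H p p \<noteq> 0"
  shows "\<exists>M. giso H M \<and> pres V M \<and> M *v p = q"
proof -
  define cr where "cr = Re (qf H p p)"
  have c: "qf H p p = of_real cr" unfolding cr_def by (rule real_form[OF herm])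
  have cr0: "cr \<noteq> 0" using nz c by auto
  have cq: "qf H q q = of_real cr" using eq c by simp
  obtain \<mu> where mu: "nsq \<mu> = 1" "qreal (qcnj \<mu> * qf H p q)"
    using exists_unit_real by blast
  define q' where "q' = vsr q \<mu>"
  have q'V: "q' \<in> V" using qV V by (simp add: q'_def qsubD)
  define dr where "dr = Re (qcnj \<mu> * qf H p q)"
  have d: "qf H p q' = of_real dr"
    using qreal_Re[OF mu(2), folded dr_def] by (simp add: q'_def qf_vsr_right)
  have d': "qf H q' p = of_real dr"
    using qf_herm[OF herm, of p q'] d by simp
  have mm: "qcnj \<mu> * \<mu> = 1" using qcnj_mult_self[of \<mu>] mu(1) by simp
  have cq': "qf H q' q' = of_real cr"
  proof -
    have "qf H q' q' = qcnj \<mu> * (of_real cr * \<mu>)" by (simp add: q'_def qf_vsr_right qf_vsr_left cq)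
    also have "\<dots> = of_real cr * (qcnj \<mu> * \<mu>)"
      by (simp only: mult.assoc[symmetric] qreal_commute[OF qreal_of_real, of cr "qcnj \<mu>"])
    finally show ?thesis using mm by simp
  qed
  obtain M1 where M1: "giso H M1" "pres V M1" "M1 *v p = q'"
  proof (cases "cr = dr")
    case False
    define w where "w = p - q'"
    have ww0: "qf H w w = of_real ((cr - dr) - (dr - cr))"
      unfolding w_def qf_diff_left qf_diff_right c d d' cq' by (simp only: of_real_diff)
    have e1: "(cr - dr) - (dr - cr) = 2 * cr - 2 * dr" by simp
    have ww: "qf H w w = of_real (2 * cr - 2 * dr)" using ww0 unfolding e1 .
    have pw0: "qf H p w = of_real (cr - dr)"
      unfolding w_def qf_diff_right c d by (simp only: of_real_diff)
    have e2: "cr - dr = (2 * cr - 2 * dr) / 2" by simp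
    have pw: "qf H p w = of_real ((2 * cr - 2 * dr) / 2)" using pw0 unfolding e2 .
    have r0: "2 * cr - 2 * dr \<noteq> 0" using False by simp
    note R = reflection[OF herm ww r0 pw]
    show ?thesis
    proof (rule that[OF R(1) pres_Tm[OF V]])
      show "w \<in> V" using qsub_diff[OF V pV q'V] by (simp add: w_def)
      show "Tm H w (of_real (- 2 / (2 * cr - 2 * dr))) *v p = q'"
        unfolding R(2) by (simp add: w_def)
    qed
  next
    case True
    define w where "w = p + q'"
    have ww0: "qf H w w = of_real ((cr + dr) + (dr + cr))"
      unfolding w_def qf_add_left qf_add_right c d d' cq' by (simp only: of_real_add)
    have e1: "(cr + dr) + (dr + cr) = 4 * cr" using True by simp
    have ww: "qf H w w = of_real (4 * cr)" using ww0 unfolding e1 .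
    have pw0: "qf H p w = of_real (cr + dr)"
      unfolding w_def qf_add_right c d by (simp only: of_real_add)
    have e2: "cr + dr = (4 * cr) / 2" using True by simp
    have pw: "qf H p w = of_real ((4 * cr) / 2)" using pw0 unfolding e2 .
    have r0: "4 * cr \<noteq> 0" using cr0 by simp
    note R = reflection[OF herm ww r0 pw]
    show ?thesis
    proof (rule that[OF giso_neg[OF R(1)] pres_neg[OF V pres_Tm[OF V]]])
      show "w \<in> V" using qsub_add[OF V pV q'V] by (simp add: w_def)
      show "- Tm H w (of_real (- 2 / (4 * cr))) *v p = q'"
        unfolding mv_neg_left R(2) by (simp add: w_def)
    qed
  qed
  have nu: "nsq (qcnj \<mu>) = 1" using mu(1) by simp
  note Ro = rotation(1)[OF herm cq cr0 nu] rotation(2)[OF herm cq cr0 nu, of \<mu>]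
  define M2 where "M2 = Tm H q ((qcnj \<mu> - 1) * of_real (1 / cr))"
  have "(M2 ** M1) *v p = M2 *v q'"
    by (simp add: matrix_vector_mul_assoc[symmetric] M1(3))
  also have "\<dots> = q"
    unfolding q'_def M2_def Ro(2) mm by simp
  finally have "(M2 ** M1) *v p = q" .
  moreover have "giso H (M2 ** M1)" using giso_comp[OF Ro(1) M1(1)] by (simp add: M2_def)
  moreover have "pres V (M2 ** M1)" using pres_comp[OF pres_Tm[OF V qV] M1(2)] by (simp add: M2_def)
  ultimately show ?thesis by blast
qed


definition wfam :: "quat^'n^'n \<Rightarrow> (quat^'n) set \<Rightarrow> nat \<Rightarrow> (nat \<Rightarrow> quat^'n) \<Rightarrow> (nat \<Rightarrow> quat^'n) \<Rightarrow> bool" where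
  "wfam H V m P Q \<longleftrightarrow> (\<forall>i<m. P i \<in> V \<and> Q i \<in> V) \<and>
     (\<forall>i<m. \<forall>j<m. qf H (P i) (P j) = qf H (Q i) (Q j)) \<and>
     (\<forall>a. comb P m a = 0 \<longleftrightarrow> comb Q m a = 0)"

definition wconc :: "quat^'n^'n \<Rightarrow> (quat^'n) set \<Rightarrow> nat \<Rightarrow> (nat \<Rightarrow> quat^'n) \<Rightarrow> (nat \<Rightarrow> quat^'n) \<Rightarrow> bool" where
  "wconc H V m P Q \<longleftrightarrow> (\<exists>U. pres V U \<and> (\<forall>x\<in>V. \<forall>y\<in>V. qf H (U *v x) (U *v y) = qf H x y) \<and>
      (\<forall>i<m. U *v P i = Q i))"

lemma gram_mixed:
  assumes "wfam H V m P Q" "i < m"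
  shows "qf H (P i) (comb P m b) = qf H (Q i) (comb Q m b)"
  using assms by (simp add: qf_comb_right wfam_def)

lemma gram_comb:
  assumes "wfam H V m P Q"
  shows "qf H (comb P m a) (comb P m b) = qf H (comb Q m a) (comb Q m b)"
  unfolding qf_comb_left using gram_mixed[OF assms] by simp

lemma giso_inj:
  assumes H: "invertible H" and g: "giso H M" and e: "M *v x = 0"
  shows "x = 0"
proof (rule qf_nondeg_left[OF H])
  fix y show "qf H x y = 0" using g e unfolding giso_def by (metis qf_zero_left)
qed

lemma split_form:
  assumes herm: "cstar H = H" and u: "qf H u p0 = 0" and w: "qf H w p0 = 0"
  shows "qf H (vsr p0 s + u) (vsr p0 t + w) = qf H (vsr p0 s) (vsr p0 t) + qf H u w"
proof -
  have "qf H p0 w = 0" using qf_herm[OF herm, of w p0] w by simp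
  then show ?thesis using u by (simp add: qf_lin)
qed

lemma qsub_subset: "qsub V \<Longrightarrow> span V = V"
  by (simp add: qsub_def span_eq_iff)

lemma aniso_step:
  fixes H :: "quat^'n^'n"
  assumes H: "invertible H" "cstar H = H" and V: "qsub V" "nondeg H V"
    and fam: "wfam H V m P Q"
    and an: "qf H (comb P m v) (comb P m v) \<noteq> 0"
    and IH: "\<And>W m' P' Q'. qsub W \<Longrightarrow> nondeg H W \<Longrightarrow> dim W < dim V \<Longrightarrow> wfam H W m' P' Q' \<Longrightarrow> wconc H W m' P' Q'"
  shows "wconc H V m P Q"
proof -
  have PV: "P i \<in> V" "Q i \<in> V" if "i < m" for i using fam that by (auto simp: wfam_def)
  define p where "p = comb P m v"
  define p0 where "p0 = comb Q m v"
  have pV: "p \<in> V" unfolding p_def by (rule qsub_comb[OF V(1) PV(1)])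
  have p0V: "p0 \<in> V" unfolding p0_def by (rule qsub_comb[OF V(1) PV(2)])
  have eqn: "qf H p p = qf H p0 p0" unfolding p_def p0_def by (rule gram_comb[OF fam])
  obtain \<phi> where phi: "giso H \<phi>" "pres V \<phi>" "\<phi> *v p = p0"
    using move_vec[OF H(2) V(1) pV p0V eqn] an by (auto simp: p_def)
  define P' where "P' = (\<lambda>i. \<phi> *v P i)"
  have fam': "wfam H V m P' Q"
    unfolding wfam_def
  proof (intro conjI allI impI)
    fix i assume "i < m"
    then show "P' i \<in> V" "Q i \<in> V" using PV phi(2) by (auto simp: P'_def pres_def)
  next
    fix i j assume "i < m" "j < m"
    then show "qf H (P' i) (P' j) = qf H (Q i) (Q j)"
      using phi(1) fam by (simp add: P'_def giso_def wfam_def)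
  next
    fix a
    have "comb P' m a = \<phi> *v comb P m a" by (simp add: P'_def mv_comb)
    then have "comb P' m a = 0 \<longleftrightarrow> comb P m a = 0" using giso_inj[OF H(1) phi(1)] by auto
    then show "comb P' m a = 0 \<longleftrightarrow> comb Q m a = 0" using fam by (simp add: wfam_def)
  qed
  have p0': "comb P' m v = p0" by (simp add: P'_def mv_comb[symmetric] p_def[symmetric] phi(3))
  define c where "c = qf H p0 p0"
  have c0: "c \<noteq> 0" using an eqn by (simp add: c_def p_def)
  have ic: "c * inverse c = 1" using c0 by simp
  have e1: "qf H (P' i) p0 = qf H (Q i) p0" if "i < m" for i
    using gram_mixed[OF fam' that, of v] by (simp add: p0' p0_def)
  have e2: "qf H p0 (P' i) = qf H p0 (Q i)" if "i < m" for i
    using e1[OF that] qf_herm[OF H(2), of "P' i" p0] qf_herm[OF H(2), of "Q i" p0] by metis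
  define \<beta> where "\<beta> i = inverse c * qf H (Q i) p0" for i
  define P1 where "P1 i = P' i - vsr p0 (\<beta> i)" for i
  define Q1 where "Q1 i = Q i - vsr p0 (\<beta> i)" for i
  define W where "W = {x \<in> V. qf H x p0 = 0}"
  have proj: "x - vsr p0 (inverse c * qf H x p0) \<in> W" if "x \<in> V" for x
  proof -
    have "qf H (x - vsr p0 (inverse c * qf H x p0)) p0 = qf H x p0 - c * (inverse c * qf H x p0)"
      by (simp add: qf_lin c_def)
    also have "\<dots> = 0" by (simp add: mult.assoc[symmetric] ic)
    finally show ?thesis using that p0V V(1) by (simp add: W_def qsub_diff qsubD)
  qed
  have WV: "W \<subseteq> V" by (auto simp: W_def)
  have qW: "qsub W"
    unfolding W_def using V(1)
    by (intro qsub_intro) (auto simp: qsub_0 qsub_add qsubD qf_lin)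
  have ndW: "nondeg H W"
    unfolding nondeg_def
  proof (intro ballI impI)
    fix y assume yW: "y \<in> W" and h: "\<forall>x\<in>W. qf H x y = 0"
    have yp: "qf H p0 y = 0" using yW qf_herm[OF H(2), of y p0] by (simp add: W_def)
    have "qf H x y = 0" if xV: "x \<in> V" for x
    proof -
      have "qf H (x - vsr p0 (inverse c * qf H x p0)) y = 0" using h proj[OF xV] by blast
      then show ?thesis using yp by (simp add: qf_lin)
    qed
    then show "y = 0" using V(2) yW WV unfolding nondeg_def by blast
  qed
  have dW: "dim W < dim V"
  proof (rule dim_psubset)
    have "p0 \<notin> W" using c0 by (simp add: W_def c_def)
    then show "span W \<subset> span V"
      using WV p0V by (auto simp: qsub_subset[OF qW] qsub_subset[OF V(1)])
  qed
  have fam1: "wfam H W m P1 Q1"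
    unfolding wfam_def
  proof (intro conjI allI impI)
    fix i assume i: "i < m"
    have "P1 i = P' i - vsr p0 (inverse c * qf H (P' i) p0)" by (simp add: P1_def \<beta>_def e1[OF i])
    then show "P1 i \<in> W" using proj fam' i by (simp add: wfam_def)
    have "Q1 i = Q i - vsr p0 (inverse c * qf H (Q i) p0)" by (simp add: Q1_def \<beta>_def)
    then show "Q1 i \<in> W" using proj fam' i by (simp add: wfam_def)
  next
    fix i j assume i: "i < m" and j: "j < m"
    have g: "qf H (P' i) (P' j) = qf H (Q i) (Q j)" using fam' i j by (simp add: wfam_def)
    show "qf H (P1 i) (P1 j) = qf H (Q1 i) (Q1 j)"
      by (simp add: P1_def Q1_def qf_lin e1[OF i] e1[OF j] e2[OF i] e2[OF j] g)
  next
    fix a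
    define s where "s = (\<Sum>i<m. \<beta> i * a i)"
    have cv: "comb (\<lambda>i. vsr p0 (\<beta> i)) m a = vsr p0 s"
      by (simp add: comb_def s_def vsr_sum_right)
    have "comb P1 m a = comb P' m (\<lambda>i. a i - v i * s)"
      unfolding P1_def comb_diff_fam cv comb_diff comb_mult p0' ..
    moreover have "comb Q1 m a = comb Q m (\<lambda>i. a i - v i * s)"
      unfolding Q1_def comb_diff_fam cv comb_diff comb_mult p0_def[symmetric] ..
    ultimately show "comb P1 m a = 0 \<longleftrightarrow> comb Q1 m a = 0"
      using fam' by (simp add: wfam_def)
  qed
  obtain U1 where U1: "pres W U1" "\<forall>x\<in>W. \<forall>y\<in>W. qf H (U1 *v x) (U1 *v y) = qf H x y"
      "\<forall>i<m. U1 *v P1 i = Q1 i"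
    using IH[OF qW ndW dW fam1] unfolding wconc_def by blast
  define Pi where "Pi = outer (vsr p0 (inverse c)) (fvec H p0)"
  have Pi: "Pi *v x = vsr p0 (inverse c * qf H x p0)" for x
    by (simp add: Pi_def outer_mv)
  define U where "U = Pi + U1 ** (mat 1 - Pi)"
  have Ux: "U *v x = vsr p0 (inverse c * qf H x p0) + U1 *v (x - vsr p0 (inverse c * qf H x p0))" for x
    by (simp add: U_def mv_add_left matrix_vector_mul_assoc[symmetric] mv_diff_left Pi)
  have UV: "pres V U"
    unfolding pres_def Ux
    using proj U1(1) WV p0V V(1) by (auto simp: pres_def intro!: qsub_add qsubD)
  have Uiso: "qf H (U *v x) (U *v y) = qf H x y" if x: "x \<in> V" and y: "y \<in> V" for x y
  proof -
    define s where "s = inverse c * qf H x p0"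
    define t where "t = inverse c * qf H y p0"
    have xW: "x - vsr p0 s \<in> W" using proj[OF x] by (simp add: s_def)
    have yW: "y - vsr p0 t \<in> W" using proj[OF y] by (simp add: t_def)
    have uxW: "U1 *v (x - vsr p0 s) \<in> W" using U1(1) xW by (simp add: pres_def)
    have uyW: "U1 *v (y - vsr p0 t) \<in> W" using U1(1) yW by (simp add: pres_def)
    have "qf H (U *v x) (U *v y) = qf H (vsr p0 s + U1 *v (x - vsr p0 s)) (vsr p0 t + U1 *v (y - vsr p0 t))"
      by (simp add: Ux s_def t_def)
    also have "\<dots> = qf H (vsr p0 s) (vsr p0 t) + qf H (U1 *v (x - vsr p0 s)) (U1 *v (y - vsr p0 t))"
      by (rule split_form[OF H(2)]) (use uxW uyW in \<open>auto simp: W_def\<close>)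
    also have "\<dots> = qf H (vsr p0 s) (vsr p0 t) + qf H (x - vsr p0 s) (y - vsr p0 t)"
      using U1(2) xW yW by simp
    also have "\<dots> = qf H (vsr p0 s + (x - vsr p0 s)) (vsr p0 t + (y - vsr p0 t))"
      by (rule split_form[OF H(2), symmetric]) (use xW yW in \<open>auto simp: W_def\<close>)
    also have "\<dots> = qf H x y" by simp
    finally show ?thesis .
  qed
  have UP: "U *v P' i = Q i" if i: "i < m" for i
  proof -
    have "U *v P' i = vsr p0 (\<beta> i) + U1 *v P1 i"
      by (simp add: Ux P1_def \<beta>_def e1[OF i])
    also have "\<dots> = Q i" using U1(3) i by (simp add: Q1_def)
    finally show ?thesis .
  qed
  have "pres V (U ** \<phi>)" by (rule pres_comp[OF UV phi(2)])
  moreover have "\<forall>x\<in>V. \<forall>y\<in>V. qf H ((U ** \<phi>) *v x) ((U ** \<phi>) *v y) = qf H x y"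
  proof (intro ballI)
    fix x y assume "x \<in> V" "y \<in> V"
    then have "\<phi> *v x \<in> V" "\<phi> *v y \<in> V" using phi(2) by (auto simp: pres_def)
    then show "qf H ((U ** \<phi>) *v x) ((U ** \<phi>) *v y) = qf H x y"
      using Uiso phi(1) by (simp add: matrix_vector_mul_assoc[symmetric] giso_def)
  qed
  moreover have "\<forall>i<m. (U ** \<phi>) *v P i = Q i"
    using UP by (simp add: matrix_vector_mul_assoc[symmetric] P'_def)
  ultimately show ?thesis unfolding wconc_def by blast
qed


lemma two_nsq_zero:
  assumes "g * qcnj g + g * qcnj g = 0"
  shows "g = 0"
proof -
  have "of_real (nsq g + nsq g) = (0::quat)" using assms by (simp only: mult_qcnj of_real_add)
  then have "nsq g + nsq g = 0" by (simp only: of_real_eq_0_iff)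
  then have "nsq g = 0" using nsq_ge0[of g] by linarith
  then show ?thesis by (simp add: nsq_eq0)
qed

lemma polar:
  fixes H :: "quat^'n^'n"
  assumes herm: "cstar H = H" and iso: "\<And>v. qf H (comb P m v) (comb P m v) = 0"
  shows "qf H (comb P m a) (comb P m b) = 0"
proof -
  define x where "x = comb P m a"
  define y where "y = comb P m b"
  define g where "g = qf H y x"
  have xx: "qf H x x = 0" using iso by (simp add: x_def)
  have yy: "qf H y y = 0" using iso by (simp add: y_def)
  have xy: "qf H x y = qcnj g" using qf_herm[OF herm, of y x] by (simp add: g_def)
  have "comb P m (\<lambda>i. a i + b i * qcnj g) = x + vsr y (qcnj g)"
    by (simp add: comb_add comb_mult x_def y_def)
  then have "qf H (x + vsr y (qcnj g)) (x + vsr y (qcnj g)) = 0" using iso by metis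
  then have "g * qcnj g + g * qcnj g = 0"
    by (simp add: qf_lin xx yy xy g_def[symmetric])
  then have "g = 0" by (rule two_nsq_zero)
  then show ?thesis using xy by (simp add: x_def y_def)
qed

lemma iso_adjust:
  fixes H :: "quat^'n^'n"
  assumes herm: "cstar H = H" and qq: "qf H q q = 0" and g0: "qf H q y \<noteq> 0"
  shows "\<exists>t. qf H (y + vsr q t) (y + vsr q t) = 0"
proof -
  define g where "g = qf H q y"
  define dr where "dr = Re (qf H y y)"
  have yy: "qf H y y = of_real dr" unfolding dr_def by (rule real_form[OF herm])
  have yq: "qf H y q = qcnj g" using qf_herm[OF herm, of q y] by (simp add: g_def)
  define t where "t = - (inverse g * of_real (dr / 2))"
  have gt: "g * t = - of_real (dr / 2)"
    using g0 by (simp add: t_def g_def mult.assoc[symmetric])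
  have tg: "qcnj t * qcnj g = - of_real (dr / 2)"
    using arg_cong[OF gt, of qcnj] by (simp only: qcnj_mult qcnj_minus qcnj_of_real)
  have "qf H (y + vsr q t) (y + vsr q t) = qf H y y + qcnj t * qf H y q + qf H q y * t + qcnj t * qf H q q * t"
    by (simp add: qf_lin algebra_simps)
  also have "\<dots> = of_real dr + - of_real (dr / 2) + - of_real (dr / 2)"
    by (simp only: yy yq qq tg g_def[symmetric] gt) simp
  also have "\<dots> = of_real (dr + - (dr / 2) + - (dr / 2))" by (simp only: of_real_add of_real_minus)
  also have "\<dots> = 0" by simp
  finally show ?thesis by blast
qed

lemma comb_upd: "comb (P(m := z)) (Suc m) a = comb P m a + vsr z (a m)"
  by (simp add: comb_Suc comb_def)

lemma witt:
  fixes H :: "quat^'n^'n"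
  assumes H: "invertible H" "cstar H = H"
  shows "qsub V \<Longrightarrow> nondeg H V \<Longrightarrow> wfam H V m P Q \<Longrightarrow> wconc H V m P Q"
proof (induction "dim V" arbitrary: V m P Q rule: less_induct)
  case less
  have IH: "wconc H W m' P' Q'" if "qsub W" "nondeg H W" "dim W < dim V" "wfam H W m' P' Q'" for W m' P' Q'
    using less.hyps that by blast
  have V: "qsub V" "nondeg H V" and fam: "wfam H V m P Q" using less.prems by auto
  have PV: "P i \<in> V" "Q i \<in> V" if "i < m" for i using fam that by (auto simp: wfam_def)
  show ?case
  proof (cases "\<exists>v. qf H (comb P m v) (comb P m v) \<noteq> 0")
    case True
    then obtain v where "qf H (comb P m v) (comb P m v) \<noteq> 0" by blast
    then show ?thesis by (rule aniso_step[OF H V fam _ IH]) auto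
  next
    case False
    then have isoP: "\<And>v. qf H (comb P m v) (comb P m v) = 0" by blast
    have GP: "qf H (P i) (P j) = 0" if "i < m" "j < m" for i j
      using polar[OF H(2) isoP, of "\<lambda>l. if l = i then 1 else 0" "\<lambda>l. if l = j then 1 else 0"] that
      by (simp add: comb_delta)
    have GQ: "qf H (Q i) (Q j) = 0" if "i < m" "j < m" for i j
      using GP[OF that] fam that by (simp add: wfam_def)
    show ?thesis
    proof (cases "\<forall>i<m. P i = 0")
      case True
      have "Q i = 0" if i: "i < m" for i
      proof -
        have "comb P m (\<lambda>l. if l = i then 1 else 0) = 0" using True i by (simp add: comb_delta)
        then have "comb Q m (\<lambda>l. if l = i then 1 else 0) = 0" using fam by (simp add: wfam_def)
        then show ?thesis using i by (simp add: comb_delta)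
      qed
      then show ?thesis unfolding wconc_def using True
        by (intro exI[of _ "mat 1"]) (simp add: pres_def)
    next
      case False
      then obtain k where k: "k < m" "P k \<noteq> 0" by blast
      define p where "p = P k"
      define q where "q = Q k"
      have pV: "p \<in> V" and qV: "q \<in> V" using PV k by (auto simp: p_def q_def)
      obtain z0 where z0: "z0 \<in> V" "qf H z0 p \<noteq> 0"
        using V(2) pV k(2) unfolding nondeg_def p_def by blast
      have pz0: "qf H p z0 \<noteq> 0" using z0(2) qf_herm[OF H(2), of z0 p] by auto
      have pp: "qf H p p = 0" using GP k by (simp add: p_def)
      obtain t where t: "qf H (z0 + vsr p t) (z0 + vsr p t) = 0"
        using iso_adjust[OF H(2) pp pz0] by blast
      define z where "z = z0 + vsr p t"
      have zV: "z \<in> V" using z0(1) pV V(1) by (simp add: z_def qsub_add qsubD)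
      have zz: "qf H z z = 0" using t by (simp add: z_def)
      have pz: "qf H p z \<noteq> 0" using pz0 pp by (simp add: z_def qf_lin)
      define \<alpha> where "\<alpha> i = qf H (P i) z" for i
      have cons: "(\<Sum>i<m. \<alpha> i * a i) = 0" if "comb Q m a = 0" for a
      proof -
        have "comb P m a = 0" using that fam by (simp add: wfam_def)
        then show ?thesis using qf_comb_left[of H P m a z] by (simp add: \<alpha>_def)
      qed
      have "\<exists>z\<in>V. \<forall>i<m. qf H (Q i) z = \<alpha> i"
        by (rule riesz_sub[OF H V]) (simp_all add: PV(2) cons)
      then obtain z' where z': "z' \<in> V" "\<forall>i<m. qf H (Q i) z' = \<alpha> i"
        by blast
      have qq: "qf H q q = 0" using GQ k by (simp add: q_def)
      have qz': "qf H q z' \<noteq> 0" using z' k pz by (simp add: q_def \<alpha>_def p_def)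
      obtain t' where t': "qf H (z' + vsr q t') (z' + vsr q t') = 0"
        using iso_adjust[OF H(2) qq qz'] by blast
      define z'' where "z'' = z' + vsr q t'"
      have z''V: "z'' \<in> V" using z'(1) qV V(1) by (simp add: z''_def qsub_add qsubD)
      have zz'': "qf H z'' z'' = 0" using t' by (simp add: z''_def)
      have Qz'': "qf H (Q i) z'' = \<alpha> i" if "i < m" for i
        using z'(2) GQ[OF that k(1)] that by (simp add: z''_def qf_lin q_def)
      define P2 where "P2 = P(m := z)"
      define Q2 where "Q2 = Q(m := z'')"
      have P2m: "P2 i = P i" "Q2 i = Q i" if "i < m" for i using that by (auto simp: P2_def Q2_def)
      have combP2: "comb P2 (Suc m) a = comb P m a + vsr z (a m)" for a
        by (simp add: P2_def comb_upd)
      have combQ2: "comb Q2 (Suc m) a = comb Q m a + vsr z'' (a m)" for a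
        by (simp add: Q2_def comb_upd)
      have relP: "comb P m a + vsr z (a m) = 0 \<longleftrightarrow> a m = 0 \<and> comb P m a = 0" for a
      proof
        assume h: "comb P m a + vsr z (a m) = 0"
        have "qf H p (comb P m a + vsr z (a m)) = 0" by (simp add: h)
        moreover have "qf H p (comb P m a) = 0"
          using GP k by (simp add: qf_comb_right p_def)
        ultimately have "qcnj (a m) * qf H p z = 0" by (simp add: qf_lin)
        then have "a m = 0" using pz by simp
        then show "a m = 0 \<and> comb P m a = 0" using h by simp
      qed simp
      have relQ: "comb Q m a + vsr z'' (a m) = 0 \<longleftrightarrow> a m = 0 \<and> comb Q m a = 0" for a
      proof
        assume h: "comb Q m a + vsr z'' (a m) = 0"
        have "qf H q (comb Q m a + vsr z'' (a m)) = 0" by (simp add: h)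
        moreover have "qf H q (comb Q m a) = 0"
          using GQ k by (simp add: qf_comb_right q_def)
        moreover have "qf H q z'' \<noteq> 0" using Qz''[OF k(1)] pz by (simp add: q_def \<alpha>_def p_def)
        ultimately have "a m = 0" by (simp add: qf_lin)
        then show "a m = 0 \<and> comb Q m a = 0" using h by simp
      qed simp
      have fam2: "wfam H V (Suc m) P2 Q2"
        unfolding wfam_def
      proof (intro conjI allI impI)
        fix i assume "i < Suc m"
        then show "P2 i \<in> V" "Q2 i \<in> V" using PV zV z''V by (auto simp: P2_def Q2_def less_Suc_eq)
      next
        fix i j assume i: "i < Suc m" and j: "j < Suc m"
        have gij: "qf H (P i) (P j) = qf H (Q i) (Q j)" if "i < m" "j < m" for i j
          using fam that by (simp add: wfam_def)
        have sym: "qf H z (P j) = qf H z'' (Q j)" if "j < m" for j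
          using Qz''[OF that] qf_herm[OF H(2), of "P j" z] qf_herm[OF H(2), of "Q j" z'']
          by (simp add: \<alpha>_def)
        show "qf H (P2 i) (P2 j) = qf H (Q2 i) (Q2 j)"
          using i j gij sym Qz'' zz zz''
          by (cases "i = m"; cases "j = m") (auto simp: P2_def Q2_def less_Suc_eq \<alpha>_def)
      next
        fix a
        show "comb P2 (Suc m) a = 0 \<longleftrightarrow> comb Q2 (Suc m) a = 0"
          unfolding combP2 combQ2 relP relQ using fam by (simp add: wfam_def)
      qed
      define v where "v = (\<lambda>i. if i = k then 1 else if i = m then qf H p z else 0)"
      have cv: "comb P2 (Suc m) v = p + vsr z (qf H p z)"
      proof -
        have "comb P m v = comb P m (\<lambda>i. if i = k then 1 else 0)"
          by (rule comb_cong) (auto simp: v_def)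
        then have "comb P m v = p" using k by (simp add: comb_delta p_def)
        moreover have "v m = qf H p z" using k by (simp add: v_def)
        ultimately show ?thesis by (simp add: combP2)
      qed
      define h where "h = qf H p z"
      have zp: "qf H z p = qcnj h" using qf_herm[OF H(2), of p z] by (simp add: h_def)
      have "qf H (p + vsr z h) (p + vsr z h) = qcnj h * qcnj h' + qcnj h * h" if "h' = qcnj h" for h'
        using that by (simp add: qf_lin pp zz zp h_def[symmetric] algebra_simps)
      then have "qf H (p + vsr z h) (p + vsr z h) = qcnj h * h + qcnj h * h" by simp
      moreover have "qcnj h * h + qcnj h * h \<noteq> 0"
      proof
        assume "qcnj h * h + qcnj h * h = 0"
        then have "qcnj h * qcnj (qcnj h) + qcnj h * qcnj (qcnj h) = 0" by simp
        then have "qcnj h = 0" by (rule two_nsq_zero)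
        then show False using pz by (simp add: h_def)
      qed
      ultimately have an: "qf H (comb P2 (Suc m) v) (comb P2 (Suc m) v) \<noteq> 0"
        by (simp add: cv h_def[symmetric])
      have "wconc H V (Suc m) P2 Q2" by (rule aniso_step[OF H V fam2 an IH])
      then obtain U where U: "pres V U" "\<forall>x\<in>V. \<forall>y\<in>V. qf H (U *v x) (U *v y) = qf H x y"
        "\<forall>i<Suc m. U *v P2 i = Q2 i" unfolding wconc_def by blast
      have "\<forall>i<m. U *v P i = Q i" using U(3) P2m by (metis less_SucI)
      then show ?thesis unfolding wconc_def using U(1,2) by blast
    qed
  qed
qed


lemma mv_axis: "(M *v axis j 1) $ i = M $ i $ j" for M :: "quat^'n^'m"
  by (simp add: matrix_vector_mult_def axis_def)

lemma mat_eq_axis: "(\<And>j. M *v axis j 1 = N *v axis j 1) \<Longrightarrow> M = N" for M N :: "quat^'n^'m"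
  by (metis mv_axis vec_eq_iff)

lemma selfadj_comm:
  fixes H A :: "quat^'n^'n"
  assumes H: "invertible H" and sa: "H_selfadjoint H A"
  shows "cstar A ** H = H ** A"
proof -
  have "matrix_inv H ** cstar A ** H = A" using sa by (simp add: H_selfadjoint_def hadj_def)
  then have "H ** (matrix_inv H ** cstar A ** H) = H ** A" by simp
  then show ?thesis by (simp add: matrix_mul_assoc invertible_inv[OF H])
qed

theorem theorem6p1:
  fixes H X :: "quat^'n^'n"
  assumes "invertible H" and "cstar H = H"
  shows "(\<exists>U A. H_polar_decomposition H X U A) \<longleftrightarrow>
         (\<exists>A. H_selfadjoint H A \<and> A ** A = hadj H X ** X \<and> qker X = qker A)"
proof
  assume "\<exists>U A. H_polar_decomposition H X U A"
  then obtain U A where U: "cstar U ** H ** U = H" and sa: "H_selfadjoint H A" and X: "X = U ** A"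
    by (auto simp: H_polar_decomposition_def H_unitary_def)
  have "hadj H X ** X = matrix_inv H ** cstar A ** (cstar U ** H ** U) ** A"
    by (simp add: hadj_def X cstar_mult matrix_mul_assoc)
  also have "\<dots> = hadj H A ** A" by (simp add: U hadj_def)
  also have "\<dots> = A ** A" using sa by (simp add: H_selfadjoint_def)
  finally have e: "A ** A = hadj H X ** X" by simp
  have injU: "y = 0" if "U *v y = 0" for y
  proof -
    have "(matrix_inv H ** cstar U ** H) *v (U *v y) = (matrix_inv H ** (cstar U ** H ** U)) *v y"
      by (simp add: matrix_vector_mul_assoc matrix_mul_assoc)
    also have "\<dots> = y" by (simp add: U invertible_inv[OF assms(1)])
    finally show ?thesis using that by simp
  qed
  have "qker X = qker A"
    unfolding qker_def X by (auto simp: matrix_vector_mul_assoc[symmetric] intro: injU)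
  then show "\<exists>A. H_selfadjoint H A \<and> A ** A = hadj H X ** X \<and> qker X = qker A"
    using sa e by blast
next
  assume "\<exists>A. H_selfadjoint H A \<and> A ** A = hadj H X ** X \<and> qker X = qker A"
  then obtain A where sa: "H_selfadjoint H A" and sq: "A ** A = hadj H X ** X" and ker: "qker X = qker A"
    by blast
  have G: "cstar X ** H ** X = cstar A ** H ** A"
  proof -
    have "H ** (A ** A) = H ** (matrix_inv H ** cstar X ** H ** X)" using sq by (simp add: hadj_def)
    also have "\<dots> = cstar X ** H ** X" by (simp add: matrix_mul_assoc invertible_inv[OF assms(1)])
    finally have "cstar X ** H ** X = H ** A ** A" by (simp add: matrix_mul_assoc)
    also have "\<dots> = cstar A ** H ** A" by (simp add: selfadj_comm[OF assms(1) sa])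
    finally show ?thesis .
  qed
  obtain xs :: "'n list" where xs: "distinct xs" "set xs = UNIV"
    using finite_distinct_list[OF finite_class.finite_UNIV] by blast
  define m where "m = length xs"
  define E where "E i = axis (xs ! i) (1::quat)" for i
  define P where "P = (\<lambda>i. A *v E i)"
  define Q where "Q = (\<lambda>i. X *v E i)"
  have fam: "wfam H UNIV m P Q"
    unfolding wfam_def
  proof (intro conjI allI impI)
    fix i j
    show "qf H (P i) (P j) = qf H (Q i) (Q j)"
      by (simp add: P_def Q_def qf_mv_both G)
  next
    fix a
    have "comb P m a = A *v comb E m a" "comb Q m a = X *v comb E m a"
      by (simp_all add: P_def Q_def mv_comb)
    then show "comb P m a = 0 \<longleftrightarrow> comb Q m a = 0"
      using ker by (auto simp: qker_def set_eq_iff)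
  qed auto
  obtain U where U: "\<forall>x\<in>UNIV. \<forall>y\<in>UNIV. qf H (U *v x) (U *v y) = qf H x y" "\<forall>i<m. U *v P i = Q i"
    using witt[OF assms qsub_UNIV nondeg_UNIV[OF assms(1)] fam] unfolding wconc_def by blast
  have unit: "cstar U ** H ** U = H"
    by (rule qf_determines) (use U(1) in \<open>simp add: qf_mv_both[symmetric]\<close>)
  have "U ** A = X"
  proof (rule mat_eq_axis)
    fix j :: 'n
    obtain i where i: "i < m" "xs ! i = j" using xs(2) by (metis UNIV_I in_set_conv_nth m_def)
    have "(U ** A) *v axis j 1 = U *v P i" by (simp add: matrix_vector_mul_assoc[symmetric] P_def E_def i)
    also have "\<dots> = X *v axis j 1" using U(2) i by (simp add: Q_def E_def)
    finally show "(U ** A) *v axis j 1 = X *v axis j 1" .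
  qed
  then have "H_polar_decomposition H X U A"
    using unit sa by (simp add: H_polar_decomposition_def H_unitary_def)
  then show "\<exists>U A. H_polar_decomposition H X U A" by blast
qed

end
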